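(* Let $S=K[x_1,\ldots,x_n]$ and $i,j\in[\lfloor n/2\rfloor]$. Then (1) if $i\neq j$, then $W_i\cap W_j=\emptyset$; (2) if $I\in W_i$, then there is a subset $B\subseteq[n]$ with $|B|=i$ and $W_B\subseteq G(I)$, and the set $W_B$ is uniquely determined by $I$ (i.e. any two such subsets $B$ yield the same $W_B$).
   Context: $K$ is a field; $G(I)$ is the minimal monomial generating set. With $\sigma$ the bijection $x_{i_1}\cdots x_{i_k}\mapsto\{i_1,\ldots,i_k\}$, the facet complex $\delta_{\mathcal{F}}(I)$ has facets $\sigma(g)$, $g\in G(I)$, the Stanley–Reisner complex is $\delta_{\mathcal{N}}(I)=\{\sigma(g)\mid g\text{ square-free monomial},\ g\notin I\}$, and a square-free monomial ideal $I$ is an $f$-ideal if both have the same $f$-vector. For a nonempty proper $B\subset[n]$ with complement $\overline B$, $W_B=\{x_ix_j\mid i\ne j,\ i,j\in B\text{ or } i,j\in\overline B\}$. An $f$-ideal $I$ whose $G(I)$ consists of square-free monomials of degree 2 is of $l$ type if $W_B\subseteq G(I)$ for some $B$ with $|B|=l$; $W_l$ is the set of $f$-ideals of $S$ of $l$ type. *)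

theory Defs
  imports Main
begin

text \<open>A square-free monomial ideal of S = K[x_1,...,x_n] is determined by its minimal
monomial generating set G(I); via sigma each square-free monomial is identified with the
set of its variable indices. So an ideal is represented by G :: nat set set, an antichain of
subsets of {1..n}. A square-free monomial u (a set) lies in I iff some generator divides it,
i.e. iff some g in G is contained in u. The field K plays no role.\<close>

definition sqfree_monomial_ideal :: "nat \<Rightarrow> nat set set \<Rightarrow> bool" where
  "sqfree_monomial_ideal n G \<longleftrightarrow> G \<subseteq> Pow {1..n} \<and> (\<forall>a\<in>G. \<forall>b\<in>G. a \<subseteq> b \<longrightarrow> a = b)"

definition in_ideal :: "nat set set \<Rightarrow> nat set \<Rightarrow> bool" where
  "in_ideal G u \<longleftrightarrow> (\<exists>g\<in>G. g \<subseteq> u)"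

definition facet_complex :: "nat set set \<Rightarrow> nat set set" where
  "facet_complex G = {F. \<exists>g\<in>G. F \<subseteq> g}"

definition SR_complex :: "nat \<Rightarrow> nat set set \<Rightarrow> nat set set" where
  "SR_complex n G = {F. F \<subseteq> {1..n} \<and> \<not> in_ideal G F}"

text \<open>f-vector entry f_{k-1}: number of faces with k vertices (k \<ge> 1).\<close>
definition fvec :: "nat set set \<Rightarrow> nat \<Rightarrow> nat" where
  "fvec \<Delta> k = card {F \<in> \<Delta>. card F = Suc k}"

definition f_ideal :: "nat \<Rightarrow> nat set set \<Rightarrow> bool" where
  "f_ideal n G \<longleftrightarrow> sqfree_monomial_ideal n G \<and>
     (\<forall>k. fvec (facet_complex G) k = fvec (SR_complex n G) k)"

definition W_set :: "nat \<Rightarrow> nat set \<Rightarrow> nat set set" where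
  "W_set n B = {{i, j} | i j. i \<noteq> j \<and>
      ((i \<in> B \<and> j \<in> B) \<or> (i \<in> {1..n} - B \<and> j \<in> {1..n} - B))}"

definition proper_subset_B :: "nat \<Rightarrow> nat set \<Rightarrow> bool" where
  "proper_subset_B n B \<longleftrightarrow> B \<subseteq> {1..n} \<and> B \<noteq> {} \<and> B \<noteq> {1..n}"

definition l_type :: "nat \<Rightarrow> nat \<Rightarrow> nat set set \<Rightarrow> bool" where
  "l_type n l G \<longleftrightarrow> f_ideal n G \<and> (\<forall>g\<in>G. card g = 2) \<and>
     (\<exists>B. proper_subset_B n B \<and> card B = l \<and> W_set n B \<subseteq> G)"

definition W_l :: "nat \<Rightarrow> nat \<Rightarrow> nat set set set" where
  "W_l n l = {G. l_type n l G}"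

end

theory Submission imports Defs begin
lemma arith4:
  fixes a b c d n :: nat
  assumes "a+d\<ge>1" "b+c\<ge>1" "a+b\<ge>1" "c+d\<ge>1" "a+c\<ge>1" "b+d\<ge>1" "n=a+b+c+d"
  shows "4*(a*d+b*c) < n*(n-1)"
proof -
  define x where "x = a+d" define y where "y = b+c"
  have amgm: "\<And>p q::nat. 4*(p*q) \<le> (p+q)*(p+q)"
  proof -
    fix p q :: nat
    have "int (4*(p*q)) \<le> int ((p+q)*(p+q))"
    proof -
      have "(int p - int q)^2 \<ge> 0" by simp
      thus ?thesis by (simp add: power2_eq_square algebra_simps)
    qed
    thus "4*(p*q) \<le> (p+q)*(p+q)" by linarith
  qed
  have h1: "4*(a*d) \<le> x*x" unfolding x_def by (rule amgm)
  have h2: "4*(b*c) \<le> y*y" unfolding y_def by (rule amgm)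
  have n: "n = x+y" using assms unfolding x_def y_def by simp
  have xy: "x \<ge> 1" "y \<ge> 1" using assms unfolding x_def y_def by auto
  have "\<not>(x=1 \<and> y=1)" using assms unfolding x_def y_def by presburger
  hence "x \<ge> 2 \<or> y \<ge> 2" using xy by auto
  hence key: "2*x*y > x + y"
  proof
    assume "x \<ge> 2" hence "x*y \<ge> 2*y" using xy by simp
    moreover have "x*y \<ge> x" using xy by simp
    moreover have "2*x*y = x*y + x*y" by simp
    ultimately show ?thesis using xy by linarith
  next
    assume "y \<ge> 2" hence "x*y \<ge> x*2" using xy by simp
    moreover have "x*y \<ge> y" using xy by simp
    moreover have "2*x*y = x*y + x*y" by simp
    ultimately show ?thesis using xy by linarith
  qed
  have "n*(n-1) = n*n - n" by (simp add: diff_mult_distrib2)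
  also have "n*n = x*x + y*y + 2*x*y" using n by (simp add: algebra_simps)
  finally have "n*(n-1) = x*x+y*y+2*x*y - (x+y)" using n by simp
  moreover have "4*(a*d+b*c) = 4*(a*d) + 4*(b*c)" by simp
  ultimately show ?thesis using h1 h2 key by linarith
qed
lemma core:
  assumes f: "f_ideal n G" and c2: "\<forall>g\<in>G. card g = 2"
    and p1: "proper_subset_B n B1" and p2: "proper_subset_B n B2"
    and w1: "W_set n B1 \<subseteq> G" and w2: "W_set n B2 \<subseteq> G"
    and ne: "B1 \<noteq> B2" and nc: "B2 \<noteq> {1..n} - B1"
  shows False
proof -
  define E where "E = {e. e \<subseteq> {1..n} \<and> card e = 2}"
  have GP: "G \<subseteq> Pow {1..n}" using f unfolding f_ideal_def sqfree_monomial_ideal_def by blast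
  have GE: "G \<subseteq> E" using GP c2 unfolding E_def by auto
  have finE: "finite E" unfolding E_def by (rule finite_subset[of _ "Pow {1..n}"]) auto
  have cE: "card E = n choose 2" unfolding E_def using n_subsets[of "{1..n}" 2] by simp
  have fv: "fvec (facet_complex G) 1 = fvec (SR_complex n G) 1" using f unfolding f_ideal_def by blast
  have s1: "{F \<in> facet_complex G. card F = Suc 1} = G"
  proof
    show "{F \<in> facet_complex G. card F = Suc 1} \<subseteq> G"
    proof
      fix F assume "F \<in> {F \<in> facet_complex G. card F = Suc 1}"
      then obtain g where g: "g \<in> G" "F \<subseteq> g" "card F = 2" unfolding facet_complex_def by auto
      have "card g = 2" using c2 g by auto
      hence "finite g" by (intro card_ge_0_finite) simp
      with g \<open>card g = 2\<close> have "F = g" using card_subset_eq by metis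
      thus "F \<in> G" using g by simp
    qed
  next
    show "G \<subseteq> {F \<in> facet_complex G. card F = Suc 1}"
      using c2 unfolding facet_complex_def by auto
  qed
  have s2: "{F \<in> SR_complex n G. card F = Suc 1} = E - G"
  proof
    show "{F \<in> SR_complex n G. card F = Suc 1} \<subseteq> E - G"
      unfolding SR_complex_def in_ideal_def E_def by auto
  next
    show "E - G \<subseteq> {F \<in> SR_complex n G. card F = Suc 1}"
    proof
      fix F assume F: "F \<in> E - G"
      have "\<not> (\<exists>g\<in>G. g \<subseteq> F)"
      proof
        assume "\<exists>g\<in>G. g \<subseteq> F"
        then obtain g where g: "g \<in> G" "g \<subseteq> F" by blast
        have "card F = 2" using F unfolding E_def by auto
        hence "finite F" by (intro card_ge_0_finite) simp
        hence "g = F" using card_subset_eq[of F g] g c2 \<open>card F = 2\<close> by auto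
        thus False using g F by auto
      qed
      thus "F \<in> {F \<in> SR_complex n G. card F = Suc 1}"
        using F unfolding SR_complex_def in_ideal_def E_def by auto
    qed
  qed
  have cG: "card G = card (E - G)" using fv s1 s2 unfolding fvec_def by simp
  have "card E = card G + card (E - G)"
    using card_Un_disjoint[of G "E - G"] finE GE finite_subset[OF GE finE]
    by (metis Diff_disjoint Diff_partition finite_Diff)
  hence k: "n choose 2 = 2 * card (E - G)" using cG cE by simp
  have ev: "even (n * (n - 1))" by (cases "even n") auto
  have nk: "n * (n - 1) = 4 * card (E - G)" proof -
    have "n*(n-1) = 2 * (n*(n-1) div 2)" using ev by simp
    thus ?thesis using k unfolding choose_two by simp
  qed
  define A where "A = B1 \<inter> B2"
  define Bb where "Bb = B1 - B2"
  define C where "C = B2 - B1"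
  define D where "D = {1..n} - B1 - B2"
  have B1s: "B1 \<subseteq> {1..n}" "B1 \<noteq> {}" "B1 \<noteq> {1..n}" using p1 unfolding proper_subset_B_def by auto
  have B2s: "B2 \<subseteq> {1..n}" "B2 \<noteq> {}" "B2 \<noteq> {1..n}" using p2 unfolding proper_subset_B_def by auto
  have fins: "finite A" "finite Bb" "finite C" "finite D"
    using B1s B2s unfolding A_def Bb_def C_def D_def by (auto intro: finite_subset)
  define X where "X = (\<lambda>(u,v). {u,v}) ` ((A \<times> D) \<union> (Bb \<times> C))"
  have EX: "E - G \<subseteq> X"
  proof
    fix e assume e: "e \<in> E - G"
    then obtain u v where uv: "u \<noteq> v" "e = {u,v}" unfolding E_def by (auto simp: card_2_iff)
    have un: "u \<in> {1..n}" "v \<in> {1..n}" using e uv unfolding E_def by auto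
    have n1: "e \<notin> W_set n B1" "e \<notin> W_set n B2" using e w1 w2 by auto
    have q1: "\<not> ((u \<in> B1 \<and> v \<in> B1) \<or> (u \<notin> B1 \<and> v \<notin> B1))"
      using n1(1) uv un unfolding W_set_def by blast
    have q2: "\<not> ((u \<in> B2 \<and> v \<in> B2) \<or> (u \<notin> B2 \<and> v \<notin> B2))"
      using n1(2) uv un unfolding W_set_def by blast
    have "(u,v) \<in> (A \<times> D) \<union> (Bb \<times> C) \<or> (v,u) \<in> (A \<times> D) \<union> (Bb \<times> C)"
      using q1 q2 un unfolding A_def Bb_def C_def D_def by auto
    thus "e \<in> X" unfolding X_def using uv
      by (auto intro: rev_image_eqI insert_commute)
  qed
  have "card (E - G) \<le> card X" using EX
    by (rule card_mono[rotated]) (simp add: X_def fins)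
  also have "card X \<le> card ((A \<times> D) \<union> (Bb \<times> C))" unfolding X_def by (rule card_image_le) (simp add: fins)
  also have "\<dots> \<le> card (A \<times> D) + card (Bb \<times> C)" by (rule card_Un_le)
  also have "\<dots> = card A * card D + card Bb * card C" by (simp add: card_cartesian_product)
  finally have le: "card (E - G) \<le> card A * card D + card Bb * card C" .
  have part: "{1..n} = A \<union> Bb \<union> C \<union> D" using B1s B2s unfolding A_def Bb_def C_def D_def by auto
  have cn: "n = card A + card Bb + card C + card D"
  proof -
    have "card {1..n} = card (A \<union> Bb \<union> C \<union> D)" using part by simp
    also have "\<dots> = card A + card Bb + card C + card D"
      using fins unfolding A_def Bb_def C_def D_def
      by (subst card_Un_disjoint, auto)+
    finally show ?thesis by simp
  qed
  have g0: "\<And>S. finite S \<Longrightarrow> S \<noteq> {} \<Longrightarrow> card S \<ge> 1" by (simp add: Suc_leI card_gt_0_iff)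
  have "A \<noteq> {} \<or> D \<noteq> {}" using nc B1s B2s unfolding A_def D_def by auto
  hence c1: "card A + card D \<ge> 1" using g0 fins by fastforce
  have "Bb \<noteq> {} \<or> C \<noteq> {}" using ne unfolding Bb_def C_def by auto
  hence c2': "card Bb + card C \<ge> 1" using g0 fins by fastforce
  have "A \<noteq> {} \<or> Bb \<noteq> {}" using B1s unfolding A_def Bb_def by auto
  hence c3: "card A + card Bb \<ge> 1" using g0 fins by fastforce
  have "C \<noteq> {} \<or> D \<noteq> {}" using B1s B2s unfolding C_def D_def by auto
  hence c4: "card C + card D \<ge> 1" using g0 fins by fastforce
  have "A \<noteq> {} \<or> C \<noteq> {}" using B2s unfolding A_def C_def by auto
  hence c5: "card A + card C \<ge> 1" using g0 fins by fastforce
  have "Bb \<noteq> {} \<or> D \<noteq> {}" using B1s B2s unfolding Bb_def D_def by auto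
  hence c6: "card Bb + card D \<ge> 1" using g0 fins by fastforce
  have "4*(card A * card D + card Bb * card C) < n*(n-1)"
    by (rule arith4[OF c1 c2' c3 c4 c5 c6 cn])
  moreover have "4 * card (E - G) \<le> 4*(card A * card D + card Bb * card C)" using le by simp
  ultimately show False using nk by linarith
qed

lemma W_compl:
  assumes "B \<subseteq> {1..n}" shows "W_set n ({1..n} - B) = W_set n B"
proof -
  have "{1..n} - ({1..n} - B) = B" using assms by auto
  thus ?thesis unfolding W_set_def by blast
qed

theorem proposition4p10:
  fixes n i j :: nat
  assumes "i \<in> {1..n div 2}" and "j \<in> {1..n div 2}"
  shows "(i \<noteq> j \<longrightarrow> W_l n i \<inter> W_l n j = {}) \<and>
         (\<forall>G \<in> W_l n i.
            (\<exists>B. proper_subset_B n B \<and> card B = i \<and> W_set n B \<subseteq> G) \<and>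
            (\<forall>B1 B2. proper_subset_B n B1 \<and> card B1 = i \<and> W_set n B1 \<subseteq> G \<and>
                     proper_subset_B n B2 \<and> card B2 = i \<and> W_set n B2 \<subseteq> G
                     \<longrightarrow> W_set n B1 = W_set n B2))"
proof (intro conjI impI ballI allI)
  assume ij: "i \<noteq> j"
  show "W_l n i \<inter> W_l n j = {}"
  proof (rule ccontr)
    assume "W_l n i \<inter> W_l n j \<noteq> {}"
    then obtain G where G: "l_type n i G" "l_type n j G" unfolding W_l_def by auto
    obtain B1 where B1: "proper_subset_B n B1" "card B1 = i" "W_set n B1 \<subseteq> G"
      using G(1) unfolding l_type_def by blast
    obtain B2 where B2: "proper_subset_B n B2" "card B2 = j" "W_set n B2 \<subseteq> G"
      using G(2) unfolding l_type_def by blast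
    have ne: "B1 \<noteq> B2" using B1 B2 ij by auto
    have nc: "B2 \<noteq> {1..n} - B1"
    proof
      assume h: "B2 = {1..n} - B1"
      have "B1 \<subseteq> {1..n}" using B1 unfolding proper_subset_B_def by auto
      hence "card B2 = n - i" using h B1 by (simp add: card_Diff_subset finite_subset)
      hence "j = n - i" using B2 by simp
      moreover have "i \<le> n div 2" "j \<le> n div 2" using assms by auto
      moreover have "2 * (n div 2) \<le> n" by simp
      ultimately show False using ij by linarith
    qed
    show False using core[OF _ _ B1(1) B2(1) B1(3) B2(3) ne nc] G(1)
      unfolding l_type_def by blast
  qed
next
  fix G assume "G \<in> W_l n i"
  thus "\<exists>B. proper_subset_B n B \<and> card B = i \<and> W_set n B \<subseteq> G"
    unfolding W_l_def l_type_def by blast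
next
  fix G B1 B2 assume G: "G \<in> W_l n i"
  assume h: "proper_subset_B n B1 \<and> card B1 = i \<and> W_set n B1 \<subseteq> G \<and>
                     proper_subset_B n B2 \<and> card B2 = i \<and> W_set n B2 \<subseteq> G"
  show "W_set n B1 = W_set n B2"
  proof (cases "B1 = B2")
    case True thus ?thesis by simp
  next
    case ne: False
    show ?thesis
    proof (cases "B2 = {1..n} - B1")
      case True
      have "B1 \<subseteq> {1..n}" using h unfolding proper_subset_B_def by auto
      thus ?thesis using True W_compl by simp
    next
      case False
      have "False" using core[OF _ _ _ _ _ _ ne False] h G unfolding W_l_def l_type_def by blast
      thus ?thesis ..
    qed
  qed
qed

end
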